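(* Let $a\in\mathcal{Z}=\prod_{p\in\mathcal{P}}\mathbb{Z}_p$. The following are equivalent: (1) $a$ is not a zero divisor in $\mathcal{Z}$; (2) $a_p\neq0$ for every $p\in\mathcal{P}$; (3) the set $\mathbb{Q}^*_+a\cap\mathcal{Z}$ is dense in $\mathcal{Z}$.
   Context: $\mathcal{P}$ is the set of primes, $\mathbb{Z}_p$ the $p$-adic integers; $\mathcal{Z}=\prod_p\mathbb{Z}_p$ is a ring under componentwise operations with the product topology, viewed inside the finite adeles $\mathcal{A}_f$, where $\mathbb{Q}^*_+$ acts by multiplication via the diagonal embedding $r\mapsto(r)_{p}$. *)

theory Defs
  imports "HOL-Analysis.Analysis" "HOL-Computational_Algebra.Primes"
begin

text \<open>p-adic integers, modelled as the inverse limit of the rings Z/p^k Z: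
  compatible sequences of residues x k in {0..<p^k} with x (Suc k) mod p^k = x k.\<close>

definition Zp :: "nat \<Rightarrow> (nat \<Rightarrow> int) set" where
  "Zp p = {x. (\<forall>k. 0 \<le> x k \<and> x k < int p ^ k) \<and> (\<forall>k. x (Suc k) mod int p ^ k = x k)}"

definition padd :: "nat \<Rightarrow> (nat \<Rightarrow> int) \<Rightarrow> (nat \<Rightarrow> int) \<Rightarrow> (nat \<Rightarrow> int)" where
  "padd p x y = (\<lambda>k. (x k + y k) mod int p ^ k)"

definition pmult :: "nat \<Rightarrow> (nat \<Rightarrow> int) \<Rightarrow> (nat \<Rightarrow> int) \<Rightarrow> (nat \<Rightarrow> int)" where
  "pmult p x y = (\<lambda>k. (x k * y k) mod int p ^ k)"

definition pscal :: "nat \<Rightarrow> int \<Rightarrow> (nat \<Rightarrow> int) \<Rightarrow> (nat \<Rightarrow> int)" where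
  "pscal p n x = (\<lambda>k. (n * x k) mod int p ^ k)"

definition pzero :: "nat \<Rightarrow> int" where
  "pzero = (\<lambda>k. 0)"

text \<open>p-adic topology = inverse limit topology = subspace of the product of discrete spaces\<close>
definition Zp_top :: "nat \<Rightarrow> (nat \<Rightarrow> int) topology" where
  "Zp_top p = subtopology (product_topology (\<lambda>k. discrete_topology (UNIV :: int set)) UNIV) (Zp p)"

definition Primes :: "nat set" where
  "Primes = {p. prime p}"

definition Zhat :: "(nat \<Rightarrow> nat \<Rightarrow> int) set" where
  "Zhat = (\<Pi>\<^sub>E p\<in>Primes. Zp p)"

definition zadd :: "(nat \<Rightarrow> nat \<Rightarrow> int) \<Rightarrow> (nat \<Rightarrow> nat \<Rightarrow> int) \<Rightarrow> (nat \<Rightarrow> nat \<Rightarrow> int)" where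
  "zadd a b = (\<lambda>p\<in>Primes. padd p (a p) (b p))"

definition zmult :: "(nat \<Rightarrow> nat \<Rightarrow> int) \<Rightarrow> (nat \<Rightarrow> nat \<Rightarrow> int) \<Rightarrow> (nat \<Rightarrow> nat \<Rightarrow> int)" where
  "zmult a b = (\<lambda>p\<in>Primes. pmult p (a p) (b p))"

definition zscal :: "int \<Rightarrow> (nat \<Rightarrow> nat \<Rightarrow> int) \<Rightarrow> (nat \<Rightarrow> nat \<Rightarrow> int)" where
  "zscal n a = (\<lambda>p\<in>Primes. pscal p n (a p))"

definition zzero :: "nat \<Rightarrow> nat \<Rightarrow> int" where
  "zzero = (\<lambda>p\<in>Primes. pzero)"

definition Zhat_top :: "(nat \<Rightarrow> nat \<Rightarrow> int) topology" where
  "Zhat_top = product_topology Zp_top Primes"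

definition zero_divisor_Zhat :: "(nat \<Rightarrow> nat \<Rightarrow> int) \<Rightarrow> bool" where
  "zero_divisor_Zhat a \<longleftrightarrow> (\<exists>b\<in>Zhat. b \<noteq> zzero \<and> zmult a b = zzero)"

text \<open>\<Q>*_+ a \<inter> \<Z>hat inside the finite adeles: b = (m/n) a with m, n positive integers,
  i.e. n b = m a (Zhat is torsion free, so b is determined by m/n and a).\<close>
definition Qpos_orbit_cap_Zhat :: "(nat \<Rightarrow> nat \<Rightarrow> int) \<Rightarrow> (nat \<Rightarrow> nat \<Rightarrow> int) set" where
  "Qpos_orbit_cap_Zhat a =
     {b\<in>Zhat. \<exists>r::rat. r > 0 \<and> zscal (snd (quotient_of r)) b = zscal (fst (quotient_of r)) a}"

end

theory Submission
  imports Defs "HOL-Number_Theory.Cong"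
begin


lemma Zp_D:
  assumes "x \<in> Zp p"
  shows "0 \<le> x k" "x k < int p ^ k" "x (Suc k) mod int p ^ k = x k"
  using assms unfolding Zp_def by auto

lemma Zp_mod_le:
  assumes "x \<in> Zp p" "j \<le> k"
  shows "x k mod int p ^ j = x j"
  using assms(2)
proof (induction k rule: dec_induct)
  case base
  then show ?case using Zp_D[OF assms(1)] by simp
next
  case (step n)
  have "x (Suc n) mod int p ^ j = (x (Suc n) mod int p ^ n) mod int p ^ j"
    by (simp add: mod_mod_cancel le_imp_power_dvd step.hyps(1))
  also have "\<dots> = x j" using Zp_D(3)[OF assms(1)] step.IH by simp
  finally show ?case .
qed

lemma Zp_dvd:
  assumes "x \<in> Zp p" "j \<le> k"
  shows "int p ^ j dvd x k - x j"
  using Zp_mod_le[OF assms] by (metis minus_mod_eq_mult_div dvd_triv_left)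

lemma pow_cancel:
  assumes "p > 0" "int p ^ (k + e) dvd int p ^ e * w"
  shows "int p ^ k dvd w"
proof -
  have "int p ^ (k+e) = int p ^ e * int p ^ k" by (simp add: power_add)
  with assms show ?thesis by simp
qed

lemma coprime_cancel:
  assumes "prime p" "\<not> int p dvd u" "int p ^ k dvd u * w"
  shows "int p ^ k dvd w"
proof -
  have "prime (int p)" using assms(1) by simp
  then have "coprime (int p) u" using assms(2) by (simp add: prime_imp_coprime)
  then have "coprime (int p ^ k) u" by simp
  then show ?thesis using assms(3) by (simp add: coprime_dvd_mult_right_iff)
qed

lemma int_factor:
  assumes "prime p" "(g::int) \<noteq> 0"
  obtains e g' where "g = int p ^ e * g'" "\<not> int p dvd g'"
proof -
  have "\<not> is_unit (int p)" using prime_gt_1_nat[OF assms(1)] by simp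
  then show ?thesis using multiplicity_decompose'[of g "int p"] assms(2) that by metis
qed

lemma valuation:
  assumes "prime p" "x \<in> Zp p" "x \<noteq> pzero"
  shows "\<exists>v. (\<forall>k. int p ^ v dvd x (k + v)) \<and> (\<forall>k. \<exists>u. x (Suc k + v) = int p ^ v * u \<and> \<not> int p dvd u)"
proof -
  have ex: "\<exists>j. x j \<noteq> 0" using assms(3) unfolding pzero_def by auto
  define j0 where "j0 = (LEAST j. x j \<noteq> 0)"
  have xj0: "x j0 \<noteq> 0" unfolding j0_def using ex by (rule LeastI_ex)
  have x0: "x 0 = 0" using Zp_D[OF assms(2), of 0] by simp
  have "j0 \<noteq> 0" using xj0 x0 by metis
  then obtain v where v: "j0 = Suc v" by (cases j0) auto
  have xv: "x v = 0" using not_less_Least[of v "\<lambda>j. x j \<noteq> 0"] v unfolding j0_def by auto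
  have d: "int p ^ v dvd x (k + v)" for k
    using Zp_mod_le[OF assms(2), of v "k+v"] xv by (simp add: dvd_eq_mod_eq_0)
  have "\<exists>u. x (Suc k + v) = int p ^ v * u \<and> \<not> int p dvd u" for k
  proof -
    obtain u where u: "x (Suc k + v) = int p ^ v * u" using d[of "Suc k"] by blast
    have "\<not> int p dvd u"
    proof
      assume "int p dvd u"
      then have "int p ^ Suc v dvd x (Suc k + v)" using u by (simp add: mult_dvd_mono)
      then have "x (Suc k + v) mod int p ^ Suc v = 0" by (simp add: dvd_eq_mod_eq_0)
      then have "x (Suc v) = 0" using Zp_mod_le[OF assms(2), of "Suc v" "Suc k + v"] by simp
      then show False using xj0 v by simp
    qed
    then show ?thesis using u by blast
  qed
  then show ?thesis using d by blast
qed

lemma dvd_pow_le: "j \<le> k \<Longrightarrow> int p ^ k dvd w \<Longrightarrow> int p ^ j dvd (w::int)"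
  using le_imp_power_dvd dvd_trans by blast

lemma Zp_domain:
  assumes "prime p" "x \<in> Zp p" "y \<in> Zp p" "\<forall>k. int p ^ k dvd x k * y k" "x \<noteq> pzero"
  shows "y = pzero"
proof -
  obtain v where v: "\<forall>k. \<exists>u. x (Suc k + v) = int p ^ v * u \<and> \<not> int p dvd u"
    using valuation[OF assms(1,2,5)] by blast
  have "y k = 0" for k
  proof -
    obtain u where u: "x (Suc k + v) = int p ^ v * u" "\<not> int p dvd u" using v by blast
    have "int p ^ (Suc k + v) dvd int p ^ v * (u * y (Suc k + v))"
      using assms(4)[rule_format, of "Suc k + v"] u(1) by (simp add: mult.assoc)
    then have "int p ^ Suc k dvd u * y (Suc k + v)"
      using pow_cancel prime_gt_0_nat[OF assms(1)] by blast
    then have "int p ^ Suc k dvd y (Suc k + v)" using coprime_cancel[OF assms(1) u(2)] by blast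
    then have "int p ^ k dvd y (Suc k + v)" using dvd_pow_le[of k "Suc k"] by simp
    then show "y k = 0" using Zp_mod_le[OF assms(3), of k "Suc k + v"] by (simp add: dvd_eq_mod_eq_0)
  qed
  then show ?thesis unfolding pzero_def by auto
qed

lemma Zp_cancel:
  assumes "prime p" "x \<in> Zp p" "y \<in> Zp p" "(g::int) \<noteq> 0"
    "\<forall>k. int p ^ k dvd g * (s * x k - t * y k)"
  shows "int p ^ k dvd s * x k - t * y k"
proof -
  obtain e g' where g: "g = int p ^ e * g'" "\<not> int p dvd g'" using int_factor[OF assms(1,4)] by blast
  have "int p ^ (k + e) dvd int p ^ e * (g' * (s * x (k+e) - t * y (k+e)))"
    using assms(5)[rule_format, of "k+e"] g(1) by (simp add: mult.assoc)
  then have "int p ^ k dvd g' * (s * x (k+e) - t * y (k+e))"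
    using pow_cancel prime_gt_0_nat[OF assms(1)] by blast
  then have A: "int p ^ k dvd s * x (k+e) - t * y (k+e)" using coprime_cancel[OF assms(1) g(2)] by blast
  have B: "int p ^ k dvd s * (x (k+e) - x k) - t * (y (k+e) - y k)"
    using Zp_dvd[OF assms(2), of k "k+e"] Zp_dvd[OF assms(3), of k "k+e"] by simp
  have "s * x k - t * y k = (s * x (k+e) - t * y (k+e)) - (s * (x (k+e) - x k) - t * (y (k+e) - y k))"
    by (simp add: algebra_simps)
  then show ?thesis using A B by (metis dvd_diff)
qed

lemma Zp_unique:
  assumes "prime p" "n = int p ^ e * n'" "\<not> int p dvd n'"
    "0 \<le> t1" "t1 < int p ^ k" "0 \<le> t2" "t2 < int p ^ k"
    "int p ^ (k + e) dvd n * t1 - z" "int p ^ (k + e) dvd n * t2 - z"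
  shows "t1 = t2"
proof -
  have "int p ^ (k + e) dvd (n * t1 - z) - (n * t2 - z)" using assms(8,9) by (rule dvd_diff)
  then have "int p ^ (k + e) dvd int p ^ e * (n' * (t1 - t2))"
    by (simp add: assms(2) algebra_simps)
  then have "int p ^ k dvd n' * (t1 - t2)" using pow_cancel prime_gt_0_nat[OF assms(1)] by blast
  then have "int p ^ k dvd t1 - t2" using coprime_cancel[OF assms(1,3)] by blast
  then have "t1 mod int p ^ k = t2 mod int p ^ k" by (simp add: mod_eq_dvd_iff)
  then show ?thesis using assms(4-7) by simp
qed

lemma Zp_div:
  assumes "prime p" "n = int p ^ e * n'" "\<not> int p dvd n'" "x \<in> Zp p"
    "\<forall>k. int p ^ e dvd x (k + e)"
  shows "\<exists>y\<in>Zp p. \<forall>k. int p ^ (k + e) dvd n * y k - m * x (k + e)"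
proof -
  have "\<exists>i. [n' * i = 1] (mod int p ^ k)" for k
  proof -
    have "prime (int p)" using assms(1) by simp
    then have "coprime (int p) n'" using assms(3) by (simp add: prime_imp_coprime)
    then have "coprime n' (int p ^ k)" by (simp add: ac_simps)
    then show ?thesis by (rule cong_solve_coprime_int)
  qed
  then obtain inv where inv: "\<And>k. [n' * inv k = 1] (mod int p ^ k)" by metis
  define y where "y k = (m * (x (k + e) div int p ^ e) * inv k) mod int p ^ k" for k
  have pp: "int p > 0" using prime_gt_0_nat[OF assms(1)] by simp
  have A: "int p ^ (k + e) dvd n * y k - m * x (k + e)" for k
  proof -
    define q where "q = x (k + e) div int p ^ e"
    have xq: "x (k + e) = int p ^ e * q" unfolding q_def using assms(5) by simp
    have "[n' * y k = n' * (m * q * inv k)] (mod int p ^ k)"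
      unfolding y_def q_def by (simp add: cong_def mod_mult_right_eq)
    also have "n' * (m * q * inv k) = (m * q) * (n' * inv k)" by (simp add: ac_simps)
    also have "[(m * q) * (n' * inv k) = (m * q) * 1] (mod int p ^ k)"
      using inv[of k] by (rule cong_mult[OF cong_refl])
    finally have "int p ^ k dvd n' * y k - m * q" by (simp add: cong_iff_dvd_diff)
    then have "int p ^ e * int p ^ k dvd int p ^ e * (n' * y k - m * q)" by simp
    moreover have "n * y k - m * x (k + e) = int p ^ e * (n' * y k - m * q)"
      unfolding xq assms(2) by (simp add: algebra_simps)
    moreover have "int p ^ (k + e) = int p ^ e * int p ^ k" by (simp add: power_add)
    ultimately show ?thesis by metis
  qed
  have R: "0 \<le> y k" "y k < int p ^ k" for k unfolding y_def using pp by simp_all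
  have C: "y (Suc k) mod int p ^ k = y k" for k
  proof (rule Zp_unique[OF assms(1,2,3)])
    show "0 \<le> y (Suc k) mod int p ^ k" "y (Suc k) mod int p ^ k < int p ^ k" using pp by simp_all
    show "0 \<le> y k" "y k < int p ^ k" using R by simp_all
    show "int p ^ (k + e) dvd n * y k - m * x (k + e)" by (rule A)
    have 1: "int p ^ (k + e) dvd n * y (Suc k) - m * x (Suc k + e)"
      using A[of "Suc k"] dvd_pow_le[of "k+e" "Suc k + e"] by simp
    have "int p ^ k dvd y (Suc k) mod int p ^ k - y (Suc k)"
      by (simp add: mod_eq_dvd_iff[symmetric])
    then have 2: "int p ^ (k + e) dvd n * (y (Suc k) mod int p ^ k - y (Suc k))"
      by (simp add: assms(2) power_add mult_dvd_mono mult.commute)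
    have 3: "int p ^ (k + e) dvd m * (x (Suc k + e) - x (k + e))"
      using Zp_dvd[OF assms(4), of "k+e" "Suc k + e"] by simp
    have "n * (y (Suc k) mod int p ^ k) - m * x (k + e) =
       (n * y (Suc k) - m * x (Suc k + e)) + n * (y (Suc k) mod int p ^ k - y (Suc k))
       + m * (x (Suc k + e) - x (k + e))" by (simp add: algebra_simps)
    then show "int p ^ (k + e) dvd n * (y (Suc k) mod int p ^ k) - m * x (k + e)"
      using 1 2 3 by (metis dvd_add)
  qed
  have "y \<in> Zp p" unfolding Zp_def using R C by auto
  then show ?thesis using A by blast
qed



lemma topspace_Zp: "topspace (Zp_top p) = Zp p"
  by (simp add: Zp_top_def)

lemma topspace_Zhat: "topspace Zhat_top = Zhat"
  by (simp add: Zhat_top_def Zhat_def topspace_Zp)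
lemma nbhd_Zp:
  assumes "openin (Zp_top p) V" "c \<in> V"
  shows "\<exists>K. \<forall>K'\<ge>K. \<forall>x\<in>Zp p. x K' = c K' \<longrightarrow> x \<in> V"
proof -
  obtain W where W: "openin (product_topology (\<lambda>k. discrete_topology (UNIV :: int set)) UNIV) W"
    "V = W \<inter> Zp p"
    using assms(1) unfolding Zp_top_def openin_subtopology by blast
  have cW: "c \<in> W" and cZ: "c \<in> Zp p" using W(2) assms(2) by auto
  obtain Y where Y: "finite {i \<in> UNIV. Y i \<noteq> topspace (discrete_topology (UNIV :: int set))}"
     "c \<in> Pi\<^sub>E UNIV Y" "Pi\<^sub>E UNIV Y \<subseteq> W"
    using W(1) cW unfolding openin_product_topology_alt by blast
  define G where "G = {i. Y i \<noteq> UNIV}"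
  have "finite G" using Y(1) unfolding G_def by simp
  then obtain K where K: "\<forall>i\<in>G. i \<le> K" using finite_nat_set_iff_bounded_le by blast
  have "x \<in> V" if "K' \<ge> K" "x \<in> Zp p" "x K' = c K'" for K' x
  proof -
    have "x \<in> Pi\<^sub>E UNIV Y"
    proof (simp add: PiE_def Pi_def, intro allI)
      fix i
      show "x i \<in> Y i"
      proof (cases "i \<in> G")
        case True
        then have "i \<le> K'" using K that(1) by auto
        then have "x i = c i" using Zp_mod_le[OF that(2), of i K'] Zp_mod_le[OF cZ, of i K'] that(3) by simp
        then show ?thesis using Y(2) by auto
      next
        case False
        then show ?thesis unfolding G_def by auto
      qed
    qed
    then show ?thesis using Y(3) W(2) that(2) by auto
  qed
  then show ?thesis by blast
qed

lemma nbhd_Zhat: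
  assumes "openin Zhat_top U" "c \<in> U"
  shows "\<exists>F K. finite F \<and> F \<subseteq> Primes \<and> (\<forall>b\<in>Zhat. (\<forall>p\<in>F. b p (Suc K) = c p (Suc K)) \<longrightarrow> b \<in> U)"
proof -
  have "\<forall>x \<in> U. \<exists>V. finite {p \<in> Primes. V p \<noteq> topspace (Zp_top p)} \<and>
                 (\<forall>p \<in> Primes. openin (Zp_top p) (V p)) \<and> x \<in> Pi\<^sub>E Primes V \<and> Pi\<^sub>E Primes V \<subseteq> U"
    using assms(1) unfolding Zhat_top_def openin_product_topology_alt .
  from bspec[OF this assms(2)]
  obtain V where V: "finite {p \<in> Primes. V p \<noteq> topspace (Zp_top p)}"
    "\<forall>p\<in>Primes. openin (Zp_top p) (V p)" "c \<in> Pi\<^sub>E Primes V" "Pi\<^sub>E Primes V \<subseteq> U"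
    by (elim exE conjE)
  define F where "F = {p \<in> Primes. V p \<noteq> topspace (Zp_top p)}"
  have "\<forall>p\<in>F. \<exists>K. \<forall>K'\<ge>K. \<forall>x\<in>Zp p. x K' = c p K' \<longrightarrow> x \<in> V p"
  proof
    fix p assume "p \<in> F"
    then have "p \<in> Primes" unfolding F_def by simp
    then have "openin (Zp_top p) (V p)" "c p \<in> V p" using V(2,3) by (auto simp: PiE_iff)
    then show "\<exists>K. \<forall>K'\<ge>K. \<forall>x\<in>Zp p. x K' = c p K' \<longrightarrow> x \<in> V p" by (rule nbhd_Zp)
  qed
  then obtain Kf where Kf: "\<forall>p\<in>F. \<forall>K'\<ge>Kf p. \<forall>x\<in>Zp p. x K' = c p K' \<longrightarrow> x \<in> V p"
    using bchoice by metis
  have fF: "finite F" using V(1) F_def by simp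
  define K where "K = Max (Kf ` F)"
  have KK: "p \<in> F \<Longrightarrow> Kf p \<le> Suc K" for p
  proof -
    assume "p \<in> F"
    then have "Kf p \<le> K" unfolding K_def using fF by (intro Max_ge) auto
    then show ?thesis by simp
  qed
  have "b \<in> U" if "b \<in> Zhat" "\<forall>p\<in>F. b p (Suc K) = c p (Suc K)" for b
  proof -
    have "b \<in> Pi\<^sub>E Primes V"
    proof -
      have "b p \<in> V p" if "p \<in> Primes" for p
      proof (cases "p \<in> F")
        case True
        have bp: "b p \<in> Zp p" using \<open>b \<in> Zhat\<close> that unfolding Zhat_def by (simp add: PiE_iff)
        have "b p (Suc K) = c p (Suc K)" using True \<open>\<forall>p\<in>F. b p (Suc K) = c p (Suc K)\<close> by blast
        then show ?thesis using Kf[rule_format, OF True KK[OF True] bp] by blast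
      next
        case False
        then have "V p = Zp p" using that unfolding F_def by (simp add: topspace_Zp)
        moreover have "b p \<in> Zp p" using \<open>b \<in> Zhat\<close> that unfolding Zhat_def by (simp add: PiE_iff)
        ultimately show ?thesis by simp
      qed
      moreover have "b \<in> extensional Primes" using \<open>b \<in> Zhat\<close> unfolding Zhat_def by (simp add: PiE_def)
      ultimately show ?thesis by (simp add: PiE_iff)
    qed
    then show ?thesis using V(4) by blast
  qed
  moreover have "F \<subseteq> Primes" unfolding F_def by blast
  ultimately show ?thesis using fF by blast
qed

lemma open_coord:
  assumes "p \<in> Primes"
  shows "openin Zhat_top {b \<in> Zhat. b p 1 = 1}"
proof -
  have c1: "continuous_map Zhat_top (Zp_top p) (\<lambda>b. b p)"
    unfolding Zhat_top_def using assms by (rule continuous_map_product_projection)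
  have c2: "continuous_map (Zp_top p) (discrete_topology (UNIV :: int set)) (\<lambda>x. x 1)"
    unfolding Zp_top_def
    by (rule continuous_map_from_subtopology, rule continuous_map_product_projection) simp
  have "continuous_map Zhat_top (discrete_topology (UNIV :: int set)) ((\<lambda>x. x 1) \<circ> (\<lambda>b. b p))"
    using c1 c2 by (rule continuous_map_compose)
  then have "openin Zhat_top {b \<in> topspace Zhat_top. ((\<lambda>x. x 1) \<circ> (\<lambda>b. b p)) b \<in> {1}}"
    by (rule openin_continuous_map_preimage) simp
  then show ?thesis by (simp add: topspace_Zhat)
qed



definition onep :: "nat \<Rightarrow> int" where "onep = (\<lambda>k. if k = 0 then 0 else 1)"

lemma onep_Zp: "prime p \<Longrightarrow> onep \<in> Zp p"
proof -
  assume "prime p"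
  then have p1: "int p > 1" using prime_gt_1_nat by simp
  then have "1 < int p ^ k" if "k > 0" for k using that by (simp add: one_less_power)
  moreover have "(1::int) mod int p ^ k = 1" if "k > 0" for k
    using \<open>\<And>k. k > 0 \<Longrightarrow> 1 < int p ^ k\<close>[OF that] by simp
  ultimately show ?thesis unfolding Zp_def onep_def by auto
qed

lemma onep_nz: "onep \<noteq> pzero"
  unfolding onep_def pzero_def by (metis one_neq_zero zero_neq_one nat.distinct(1))

lemma pzero_Zp: "p > 0 \<Longrightarrow> pzero \<in> Zp p"
  unfolding Zp_def pzero_def by auto

lemma Zhat_Zp: "b \<in> Zhat \<Longrightarrow> p \<in> Primes \<Longrightarrow> b p \<in> Zp p"
  unfolding Zhat_def by (simp add: PiE_iff)

lemma Primes_prime: "p \<in> Primes \<Longrightarrow> prime p"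
  unfolding Primes_def by simp

lemma part1:
  assumes "a \<in> Zhat"
  shows "\<not> zero_divisor_Zhat a \<longleftrightarrow> (\<forall>p\<in>Primes. a p \<noteq> pzero)"
proof
  assume nz: "\<not> zero_divisor_Zhat a"
  show "\<forall>p\<in>Primes. a p \<noteq> pzero"
  proof (rule ccontr)
    assume "\<not> (\<forall>p\<in>Primes. a p \<noteq> pzero)"
    then obtain p where p: "p \<in> Primes" "a p = pzero" by blast
    define b where "b = (\<lambda>q\<in>Primes. if q = p then onep else pzero)"
    have "b \<in> Zhat" unfolding Zhat_def b_def
      using onep_Zp Primes_prime pzero_Zp prime_gt_0_nat by (auto simp: PiE_iff)
    moreover have "b \<noteq> zzero"
    proof
      assume "b = zzero"
      then have "b p = zzero p" by simp
      then show False using p(1) onep_nz unfolding b_def zzero_def by simp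
    qed
    moreover have "zmult a b = zzero"
      unfolding zmult_def zzero_def
    proof (rule restrict_ext)
      fix q assume "q \<in> Primes"
      show "pmult q (a q) (b q) = pzero"
        unfolding pmult_def pzero_def using p \<open>q \<in> Primes\<close>
        by (auto simp: b_def pzero_def)
    qed
    ultimately show False using nz unfolding zero_divisor_Zhat_def by blast
  qed
next
  assume all: "\<forall>p\<in>Primes. a p \<noteq> pzero"
  show "\<not> zero_divisor_Zhat a"
  proof
    assume "zero_divisor_Zhat a"
    then obtain b where b: "b \<in> Zhat" "b \<noteq> zzero" "zmult a b = zzero"
      unfolding zero_divisor_Zhat_def by blast
    have "\<exists>q\<in>Primes. b q \<noteq> pzero"
    proof (rule ccontr)
      assume "\<not> (\<exists>q\<in>Primes. b q \<noteq> pzero)"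
      then have "b = zzero" using b(1) unfolding zzero_def Zhat_def
        by (intro ext) (auto simp: PiE_def extensional_def)
      then show False using b(2) by simp
    qed
    then obtain q where q: "q \<in> Primes" "b q \<noteq> pzero" by blast
    have "zmult a b q = zzero q" using b(3) by simp
    then have "pmult q (a q) (b q) = pzero" using q(1) unfolding zmult_def zzero_def by simp
    then have "\<forall>k. int q ^ k dvd a q k * b q k"
      unfolding pmult_def pzero_def by (metis dvd_eq_mod_eq_0)
    then have "b q = pzero"
      using Zp_domain[OF Primes_prime[OF q(1)] Zhat_Zp[OF assms q(1)] Zhat_Zp[OF b(1) q(1)]] all q(1)
      by blast
    then show False using q(2) by simp
  qed
qed

lemma orbit_D:
  assumes "b \<in> Qpos_orbit_cap_Zhat a"
  shows "b \<in> Zhat \<and> (\<exists>m n. n > 0 \<and> (\<forall>q\<in>Primes. \<forall>k. (n * b q k) mod int q ^ k = (m * a q k) mod int q ^ k))"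
proof -
  obtain r where r: "b \<in> Zhat" "r > 0" "zscal (snd (quotient_of r)) b = zscal (fst (quotient_of r)) a"
    using assms unfolding Qpos_orbit_cap_Zhat_def by blast
  obtain m n where mn: "quotient_of r = (m, n)" by (cases "quotient_of r")
  have "n > 0" using quotient_of_denom_pos[OF mn] .
  have "\<forall>q\<in>Primes. \<forall>k. (n * b q k) mod int q ^ k = (m * a q k) mod int q ^ k"
  proof (intro ballI allI)
    fix q k assume q: "q \<in> Primes"
    have "zscal n b q = zscal m a q" using r(3) mn by simp
    then have "pscal q n (b q) = pscal q m (a q)" using q unfolding zscal_def by simp
    then show "(n * b q k) mod int q ^ k = (m * a q k) mod int q ^ k"
      unfolding pscal_def by metis
  qed
  then show ?thesis using r(1) \<open>n > 0\<close> by blast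
qed

lemma part3:
  assumes "a \<in> Zhat" "Zhat_top closure_of (Qpos_orbit_cap_Zhat a) = topspace Zhat_top"
  shows "\<forall>p\<in>Primes. a p \<noteq> pzero"
proof (rule ccontr)
  assume "\<not> (\<forall>p\<in>Primes. a p \<noteq> pzero)"
  then obtain p where p: "p \<in> Primes" "a p = pzero" by blast
  have pp: "prime p" using Primes_prime[OF p(1)] .
  define c where "c = (\<lambda>q\<in>Primes. onep)"
  have "c \<in> Zhat" unfolding Zhat_def c_def using onep_Zp Primes_prime by (auto simp: PiE_iff)
  then have "c \<in> Zhat_top closure_of (Qpos_orbit_cap_Zhat a)" using assms(2) topspace_Zhat by simp
  moreover have "c \<in> {b \<in> Zhat. b p 1 = 1}" using \<open>c \<in> Zhat\<close> p(1) unfolding c_def onep_def by simp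
  ultimately have "\<exists>y. y \<in> Qpos_orbit_cap_Zhat a \<and> y \<in> {b \<in> Zhat. b p 1 = 1}"
    using open_coord[OF p(1)] unfolding in_closure_of by (meson)
  then obtain y where y: "y \<in> Qpos_orbit_cap_Zhat a" "y \<in> Zhat" "y p 1 = 1"
    by blast
  obtain m n where mn: "n > 0" "\<forall>q\<in>Primes. \<forall>k. (n * y q k) mod int q ^ k = (m * a q k) mod int q ^ k"
    using orbit_D[OF y(1)] by blast
  have "\<forall>k. int p ^ k dvd n * (1 * y p k - 0 * y p k)"
  proof
    fix k
    have "(n * y p k) mod int p ^ k = 0" using mn(2) p unfolding pzero_def by simp
    then show "int p ^ k dvd n * (1 * y p k - 0 * y p k)" by (simp add: dvd_eq_mod_eq_0)
  qed
  from Zp_cancel[OF pp Zhat_Zp[OF y(2) p(1)] Zhat_Zp[OF y(2) p(1)] _ this, of 1]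
  have "int p ^ 1 dvd y p 1" using mn(1) by simp
  then have "int p dvd 1" using y(3) by simp
  then show False using pp prime_gt_1_nat by simp
qed



lemma not_dvd_prod:
  assumes "prime q" "finite S" "S \<subseteq> Primes" "q \<notin> S"
  shows "\<not> int q dvd int (\<Prod>p\<in>S. p ^ f p)"
proof
  assume "int q dvd int (\<Prod>p\<in>S. p ^ f p)"
  then have "q dvd (\<Prod>p\<in>S. p ^ f p)" by (simp only: of_nat_dvd_iff)
  then have "\<exists>p\<in>S. q dvd p ^ f p" by (simp only: prime_dvd_prod_iff[OF assms(2,1)])
  then obtain p where p: "p \<in> S" "q dvd p ^ f p" by (elim bexE)
  have pP: "prime p" using Primes_prime p(1) assms(3) by blast
  have "q dvd p" using prime_dvd_power[OF assms(1) p(2)] .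
  then have "q = p" by (rule primes_dvd_imp_eq[OF assms(1) pP])
  then show False using p(1) assms(4) by simp
qed

lemma part2:
  assumes "a \<in> Zhat" and all: "\<forall>p\<in>Primes. a p \<noteq> pzero"
  shows "Zhat_top closure_of (Qpos_orbit_cap_Zhat a) = topspace Zhat_top"
proof (rule antisym)
  show "Zhat_top closure_of Qpos_orbit_cap_Zhat a \<subseteq> topspace Zhat_top"
    by (rule closure_of_subset_topspace)
  show "topspace Zhat_top \<subseteq> Zhat_top closure_of Qpos_orbit_cap_Zhat a"
  proof
    fix c assume ct: "c \<in> topspace Zhat_top"
    then have cZ: "c \<in> Zhat" by (simp add: topspace_Zhat)
    have "\<exists>y. y \<in> Qpos_orbit_cap_Zhat a \<and> y \<in> T" if T: "c \<in> T" "openin Zhat_top T" for T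
    proof -
      obtain F K0 where FK: "finite F" "F \<subseteq> Primes"
        "\<forall>b\<in>Zhat. (\<forall>p\<in>F. b p (Suc K0) = c p (Suc K0)) \<longrightarrow> b \<in> T"
        using nbhd_Zhat[OF T(2,1)] by blast
      define L where "L = Suc K0"
      have V: "\<forall>p\<in>Primes. \<exists>v. (\<forall>k. int p ^ v dvd a p (k + v)) \<and>
              (\<forall>k. \<exists>u. a p (Suc k + v) = int p ^ v * u \<and> \<not> int p dvd u)"
      proof
        fix p assume p: "p \<in> Primes"
        show "\<exists>v. (\<forall>k. int p ^ v dvd a p (k + v)) \<and>
              (\<forall>k. \<exists>u. a p (Suc k + v) = int p ^ v * u \<and> \<not> int p dvd u)"
          by (rule valuation[OF Primes_prime[OF p] Zhat_Zp[OF assms(1) p] all[rule_format, OF p]])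
      qed
      from bchoice[OF V] obtain vf where vf: "\<forall>p\<in>Primes. (\<forall>k. int p ^ vf p dvd a p (k + vf p)) \<and>
              (\<forall>k. \<exists>u. a p (Suc k + vf p) = int p ^ vf p * u \<and> \<not> int p dvd u)"
        by blast
      have U: "\<forall>p\<in>F. \<exists>u. a p (L + vf p) = int p ^ vf p * u \<and> \<not> int p dvd u"
      proof
        fix p assume "p \<in> F"
        then have "p \<in> Primes" using FK(2) by blast
        then have "\<forall>k. \<exists>u. a p (Suc k + vf p) = int p ^ vf p * u \<and> \<not> int p dvd u" using vf by blast
        then show "\<exists>u. a p (L + vf p) = int p ^ vf p * u \<and> \<not> int p dvd u" unfolding L_def by blast
      qed
      from bchoice[OF U] obtain uf where uf: "\<forall>p\<in>F. a p (L + vf p) = int p ^ vf p * uf p \<and> \<not> int p dvd uf p"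
        by blast
      define n where "n = int (\<Prod>p\<in>F. p ^ vf p)"
      define e where "e q = (if q \<in> F then vf q else 0)" for q
      define n' where "n' q = int (\<Prod>p\<in>F-{q}. p ^ vf p)" for q
      have fac: "n = int q ^ e q * n' q" for q
      proof (cases "q \<in> F")
        case True
        then show ?thesis unfolding n_def n'_def e_def
          using prod.remove[OF FK(1) True, of "\<lambda>p. p ^ vf p"] by simp
      next
        case False
        then show ?thesis unfolding n_def n'_def e_def by simp
      qed
      have nd: "\<not> int q dvd n' q" if "q \<in> Primes" for q
        unfolding n'_def using not_dvd_prod[OF Primes_prime[OF that], of "F - {q}"] FK(1,2) by auto
      have npos: "n > 0" unfolding n_def using FK(2) Primes_prime prime_gt_0_nat
        by (auto intro!: prod_pos)
      have W: "\<forall>p\<in>F. \<exists>w. [uf p * w = 1] (mod int p ^ L)"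
      proof
        fix p assume p: "p \<in> F"
        have "prime (int p)" using p FK(2) Primes_prime by auto
        then have "coprime (int p) (uf p)" using uf p by (simp add: prime_imp_coprime)
        then have "coprime (uf p) (int p ^ L)" by (simp add: ac_simps)
        then show "\<exists>w. [uf p * w = 1] (mod int p ^ L)" by (rule cong_solve_coprime_int)
      qed
      from bchoice[OF W] obtain wf where wf: "\<forall>p\<in>F. [uf p * wf p = 1] (mod int p ^ L)"
        by blast
      define R where "R p = nat ((n' p * c p L * wf p) mod int (p ^ L))" for p
      have cop: "\<forall>i\<in>F. \<forall>j\<in>F. i \<noteq> j \<longrightarrow> coprime (i ^ L) (j ^ L)"
        using FK(2) Primes_prime by (auto intro!: primes_coprime)
      obtain x where x: "\<forall>p\<in>F. [x = R p] (mod p ^ L)"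
        using chinese_remainder_nat[OF FK(1) cop] by blast
      define m where "m = int x + int (\<Prod>p\<in>F. p ^ L)"
      have mpos: "m > 0" unfolding m_def using FK(2) Primes_prime prime_gt_0_nat
        by (auto intro!: prod_pos add_nonneg_pos)
      have mc: "int p ^ L dvd n' p * c p L - m * uf p" if p: "p \<in> F" for p
      proof -
        have pp: "int p > 0" using p FK(2) Primes_prime prime_gt_0_nat by auto
        have "[x = R p] (mod p ^ L)" using x p by blast
        then have "[int x = int (R p)] (mod int (p ^ L))" by (simp only: cong_int_iff)
        moreover have "int (R p) = (n' p * c p L * wf p) mod int (p ^ L)"
          unfolding R_def using pp by simp
        ultimately have 1: "[int x = n' p * c p L * wf p] (mod int p ^ L)"
          by (simp add: cong_def)
        have "int (p ^ L) dvd int (\<Prod>p\<in>F. p ^ L)"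
          unfolding of_nat_dvd_iff using dvd_prodI[OF FK(1) p, where f="\<lambda>p. p ^ L"] by simp
        then have 2: "[int (\<Prod>p\<in>F. p ^ L) = 0] (mod int p ^ L)"
          by (simp add: cong_0_iff)
        have "[m = n' p * c p L * wf p + 0] (mod int p ^ L)"
          unfolding m_def using 1 2 by (rule cong_add)
        then have "[m * uf p = n' p * c p L * wf p * uf p] (mod int p ^ L)"
          by (simp add: cong_mult_rcancel cong_scalar_right)
        also have "n' p * c p L * wf p * uf p = n' p * c p L * (uf p * wf p)" by (simp add: ac_simps)
        also have "[\<dots> = n' p * c p L * 1] (mod int p ^ L)"
          using wf p by (intro cong_mult cong_refl) auto
        finally show ?thesis by (simp add: cong_iff_dvd_diff dvd_diff_commute)
      qed
      have BB: "\<forall>q\<in>Primes. \<exists>y\<in>Zp q. \<forall>k. int q ^ (k + e q) dvd n * y k - m * a q (k + e q)"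
      proof
        fix q assume q: "q \<in> Primes"
        have "\<forall>k. int q ^ e q dvd a q (k + e q)"
          using vf q unfolding e_def by auto
        then show "\<exists>y\<in>Zp q. \<forall>k. int q ^ (k + e q) dvd n * y k - m * a q (k + e q)"
          using Zp_div[OF Primes_prime[OF q] fac nd[OF q] Zhat_Zp[OF assms(1) q]] by blast
      qed
      from bchoice[OF BB[unfolded Bex_def]] obtain B where B: "\<forall>q\<in>Primes. B q \<in> Zp q \<and> (\<forall>k. int q ^ (k + e q) dvd n * B q k - m * a q (k + e q))"
        by blast
      define b where "b = restrict B Primes"
      have bZ: "b \<in> Zhat" unfolding b_def Zhat_def using B by (auto simp: PiE_iff)
      have "b p L = c p L" if p: "p \<in> F" for p
      proof -
        have pP: "p \<in> Primes" using p FK(2) by auto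
        have ep: "e p = vf p" using p unfolding e_def by simp
        have "int p ^ (L + e p) dvd n * c p L - m * a p (L + e p)"
        proof -
          have "n * c p L - m * a p (L + e p) = int p ^ vf p * (n' p * c p L - m * uf p)"
            using fac[of p] uf p ep by (simp add: algebra_simps)
          moreover have "int p ^ (L + e p) = int p ^ vf p * int p ^ L" by (simp add: ep power_add)
          ultimately show ?thesis using mc[OF p] by simp
        qed
        moreover have "int p ^ (L + e p) dvd n * B p L - m * a p (L + e p)" using B pP by blast
        moreover have "0 \<le> B p L" "B p L < int p ^ L" using Zp_D B pP by blast+
        moreover have "0 \<le> c p L" "c p L < int p ^ L" using Zp_D Zhat_Zp[OF cZ pP] by blast+
        ultimately have "B p L = c p L"
          using Zp_unique[OF Primes_prime[OF pP] fac nd[OF pP]] by blast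
        then show ?thesis unfolding b_def using pP by simp
      qed
      then have bT: "b \<in> T" using FK(3) bZ unfolding L_def by blast
      define r where "r = rat_of_int m / rat_of_int n"
      have rpos: "r > 0" unfolding r_def using mpos npos by simp
      obtain m' n'' where qr: "quotient_of r = (m', n'')" by (cases "quotient_of r")
      have n''pos: "n'' > 0" using quotient_of_denom_pos[OF qr] .
      have "rat_of_int m / rat_of_int n = rat_of_int m' / rat_of_int n''"
        using quotient_of_div[OF qr] r_def by simp
      then have "rat_of_int m * rat_of_int n'' = rat_of_int m' * rat_of_int n"
        using npos n''pos by (simp add: frac_eq_eq)
      then have mm: "m * n'' = m' * n" by (metis of_int_eq_iff of_int_mult)
      have zs: "zscal n'' b = zscal m' a"
        unfolding zscal_def
      proof (rule restrict_ext)
        fix q assume q: "q \<in> Primes"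
        have Bq: "B q \<in> Zp q" using B q by blast
        have D1: "int q ^ k dvd n * B q k - m * a q k" for k
        proof -
          have "int q ^ (k + e q) dvd n * B q k - m * a q (k + e q)" using B q by blast
          then have 1: "int q ^ k dvd n * B q k - m * a q (k + e q)"
            using dvd_pow_le[of k "k + e q"] by simp
          have 2: "int q ^ k dvd m * (a q (k + e q) - a q k)"
            using Zp_dvd[OF Zhat_Zp[OF assms(1) q], of k "k + e q"] by simp
          have "n * B q k - m * a q k = (n * B q k - m * a q (k + e q)) + m * (a q (k + e q) - a q k)"
            by (simp add: algebra_simps)
          then show ?thesis using 1 2 by (metis dvd_add)
        qed
        have Dall: "\<forall>k. int q ^ k dvd n * (n'' * B q k - m' * a q k)"
        proof
          fix k
          have "n * (n'' * B q k - m' * a q k) = n'' * (n * B q k - m * a q k)"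
            using mm by (simp add: algebra_simps)
          then show "int q ^ k dvd n * (n'' * B q k - m' * a q k)" using D1[of k] by simp
        qed
        have nn: "n \<noteq> 0" using npos by simp
        have "int q ^ k dvd n'' * B q k - m' * a q k" for k
          by (rule Zp_cancel[OF Primes_prime[OF q] Bq Zhat_Zp[OF assms(1) q] nn Dall])
        then show "pscal q n'' (b q) = pscal q m' (a q)"
          unfolding pscal_def b_def using q by (simp add: fun_eq_iff mod_eq_dvd_iff)
      qed
      have "zscal (snd (quotient_of r)) b = zscal (fst (quotient_of r)) a" using zs qr by simp
      then have "b \<in> Qpos_orbit_cap_Zhat a"
        unfolding Qpos_orbit_cap_Zhat_def using bZ rpos by blast
      then show ?thesis using bT by blast
    qed
    then show "c \<in> Zhat_top closure_of Qpos_orbit_cap_Zhat a"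
      unfolding in_closure_of using ct by blast
  qed
qed

theorem lemma2p9:
  assumes "a \<in> Zhat"
  shows "(\<not> zero_divisor_Zhat a \<longleftrightarrow> (\<forall>p\<in>Primes. a p \<noteq> pzero))
       \<and> ((\<forall>p\<in>Primes. a p \<noteq> pzero) \<longleftrightarrow>
            Zhat_top closure_of (Qpos_orbit_cap_Zhat a) = topspace Zhat_top)"
  using part1[OF assms] part2[OF assms] part3[OF assms] by blast

end
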